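(* Let $\epsilon>0$ and let $E\subset\mathbb{R}^2$ be a measurable set with $[0,1]^2\subset E\subset[-\epsilon,1+\epsilon]^2$. Let $0<s''<s'<s<2s''$, and let $a,b$ be real numbers with $0\le a$, $a+s\le 1$, $0\le b-s$, $b\le 1$. Let $v,v',v''\in\mathbb{R}^2$ and suppose that $E_2(b-s,b)$ complements $E_1(a,a+s)+v$, $E_2(b-s',b)$ complements $E_1(a,a+s')+v'$, and $E_2(b-s'',b)$ complements $E_1(a,a+s'')+v''$. Then the points $v,v',v''$ are collinear. Moreover, if $v\neq v''$, the absolute value of the slope of the line through $v$ and $v''$ is at most $\epsilon(2s''-s)^{-1}$.
   Context: Coordinates in $\mathbb{R}^2$ are $(x_1,x_2)$. For $0\le c\le d\le 1$ define $E_1(c,d)=(E\cap\{c\le x_1\le d,\ x_2\le 0\})\cup\{c\le x_1\le d,\ x_2\ge 0\}$ and $E_2(c,d)=(E\cap\{c\le x_1\le d,\ x_2\ge 0\})\cup\{c\le x_1\le d,\ x_2\le 0\}$. Let $S_{c,d}=[c,d]\times\mathbb{R}$. For $v=(v_1,v_2)\in\mathbb{R}^2$ and $0\le c'\le d'\le 1$, we say that $E_2(c,d)$ complements $E_1(c',d')+v$ if, up to sets of Lebesgue measure zero, the sets $E_2(c,d)$ and $E_1(c',d')+v$ are disjoint and their union equals $S_{c,d}$ (so $E_1(c',d')+v$ sits above $E_2(c,d)$, and necessarily $c'+v_1=c$, $d'+v_1=d$). *)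

theory Defs
  imports "HOL-Analysis.Analysis"
begin

definition E1 :: "(real \<times> real) set \<Rightarrow> real \<Rightarrow> real \<Rightarrow> (real \<times> real) set" where
  "E1 E c d = (E \<inter> {x. c \<le> fst x \<and> fst x \<le> d \<and> snd x \<le> 0})
              \<union> {x. c \<le> fst x \<and> fst x \<le> d \<and> snd x \<ge> 0}"

definition E2 :: "(real \<times> real) set \<Rightarrow> real \<Rightarrow> real \<Rightarrow> (real \<times> real) set" where
  "E2 E c d = (E \<inter> {x. c \<le> fst x \<and> fst x \<le> d \<and> snd x \<ge> 0})
              \<union> {x. c \<le> fst x \<and> fst x \<le> d \<and> snd x \<le> 0}"

definition strip :: "real \<Rightarrow> real \<Rightarrow> (real \<times> real) set" where
  "strip c d = {x. c \<le> fst x \<and> fst x \<le> d}"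

definition complements ::
  "(real \<times> real) set \<Rightarrow> real \<Rightarrow> real \<Rightarrow> real \<Rightarrow> real \<Rightarrow> real \<times> real \<Rightarrow> bool" where
  "complements E c d c' d' v \<longleftrightarrow>
     (let A = E2 E c d; B = (\<lambda>x. x + v) ` E1 E c' d' in
       A \<inter> B \<in> null_sets lebesgue \<and>
       ((A \<union> B) - strip c d) \<union> (strip c d - (A \<union> B)) \<in> null_sets lebesgue)"

end

theory Submission
  imports Defs
begin

lemma chain_lemma:
  fixes F :: "real \<Rightarrow> real \<Rightarrow> real"
  assumes tp: "0 < t'" "t' < t" "t < S"
    and rel: "\<And>x y. a \<le> x \<Longrightarrow> x \<le> y \<Longrightarrow> y \<le> a + S \<Longrightarrow> F (x+t) (y+t) = F x y + D*(y-x)"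
    and rel': "\<And>x y. a \<le> x \<Longrightarrow> x \<le> y \<Longrightarrow> y \<le> a + S \<Longrightarrow> F (x+t') (y+t') = F x y + D'*(y-x)"
    and bnd: "\<And>p q. p \<le> q \<Longrightarrow> 0 \<le> F p q \<and> F p q \<le> e*(q-p)"
  shows "D'*t = D*t'"
proof -
  define l where "l = (S-t)/2"
  have l: "0 < l" "t \<le> S - l" using tp by (auto simp: l_def field_simps)
  define h where "h x = F x (x+l)" for x
  have hr: "h (x+t) = h x + D*l" if "a \<le> x" "x \<le> a+S-l" for x
    using rel[of x "x+l"] that l by (simp add: h_def add.commute add.left_commute)
  have hr': "h (x+t') = h x + D'*l" if "a \<le> x" "x \<le> a+S-l" for x
    using rel'[of x "x+l"] that l by (simp add: h_def add.commute add.left_commute)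
  have hb: "0 \<le> h x \<and> h x \<le> e*l" for x using bnd[of x "x+l"] l by (simp add: h_def)
  have claim: "\<exists>x (M::nat). a \<le> x \<and> x \<le> a+S-l \<and> x = a + n*t' - M*t \<and> h x = h a + n*D'*l - M*D*l" for n::nat
  proof (induction n)
    case 0
    then show ?case using l tp by (intro exI[of _ a] exI[of _ 0]) auto
  next
    case (Suc n)
    then obtain x and M :: nat where x: "a \<le> x" "x \<le> a+S-l" "x = a + n*t' - M*t" "h x = h a + n*D'*l - M*D*l"
      by blast
    have hx': "h (x+t') = h x + D'*l" using hr' x by auto
    show ?case
    proof (cases "x + t' \<le> a+S-l")
      case True
      then show ?thesis using x hx' tp
        by (intro exI[of _ "x+t'"] exI[of _ M]) (auto simp: algebra_simps)
    next
      case False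
      have y: "a \<le> x+t'-t" "x+t'-t \<le> a+S-l" using False x l tp by auto
      have "h (x+t'-t+t) = h (x+t'-t) + D*l" using hr y by blast
      then have "h (x+t'-t) = h x + D'*l - D*l" using hx' by simp
      then have e1: "h (x+t'-t) = h a + real (Suc n)*D'*l - real (Suc M)*D*l" using x(4) by (simp add: algebra_simps)
      have e2: "x+t'-t = a + real (Suc n)*t' - real (Suc M)*t" using x(3) by (simp add: algebra_simps)
      show ?thesis using y e1 e2 by blast
    qed
  qed
  have bound: "\<bar>real n * (D'*t - D*t')\<bar> \<le> t*e + \<bar>D\<bar>*S" for n::nat
  proof -
    obtain x and M :: nat where x: "a \<le> x" "x \<le> a+S-l" "x = a + n*t' - M*t" "h x = h a + n*D'*l - M*D*l"
      using claim by blast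
    have "\<bar>h x - h a\<bar> \<le> e*l" using hb[of x] hb[of a] by auto
    then have "\<bar>(n*D' - M*D)*l\<bar> \<le> e*l" using x(4) by (simp add: algebra_simps)
    then have "\<bar>n*D' - M*D\<bar>*l \<le> e*l" using l by (simp add: abs_mult)
    then have A: "\<bar>n*D' - M*D\<bar> \<le> e" using l by simp
    have B: "\<bar>M*t - n*t'\<bar> \<le> S" using x l by auto
    have "real n * (D'*t - D*t') = t*(n*D' - M*D) + D*(M*t - n*t')" by (simp add: algebra_simps)
    also have "\<bar>\<dots>\<bar> \<le> t*\<bar>n*D' - M*D\<bar> + \<bar>D\<bar>*\<bar>M*t - n*t'\<bar>"
      using tp by (simp add: abs_mult abs_triangle_ineq[THEN order_trans])
    also have "\<dots> \<le> t*e + \<bar>D\<bar>*S"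
      using A B tp by (intro add_mono mult_left_mono) auto
    finally show ?thesis .
  qed
  show ?thesis
  proof (rule ccontr)
    assume ne: "D'*t \<noteq> D*t'"
    define c where "c = \<bar>D'*t - D*t'\<bar>"
    have c: "c > 0" using ne by (simp add: c_def)
    obtain n :: nat where n: "(t*e + \<bar>D\<bar>*S)/c < n" using reals_Archimedean2 by blast
    then have "t*e + \<bar>D\<bar>*S < n*c" using c by (simp add: field_simps)
    moreover have "\<bar>real n * (D'*t - D*t')\<bar> = n*c" by (simp add: c_def abs_mult)
    ultimately show False using bound[of n] by simp
  qed
qed
lemma slope_lemma:
  fixes F :: "real \<Rightarrow> real \<Rightarrow> real"
  assumes tp: "0 < t" "t < S"
    and rel: "\<And>x y. a \<le> x \<Longrightarrow> x \<le> y \<Longrightarrow> y \<le> a + S \<Longrightarrow> F (x+t) (y+t) = F x y + D*(y-x)"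
    and add: "\<And>p q r. p \<le> q \<Longrightarrow> q \<le> r \<Longrightarrow> F p r = F p q + F q r"
    and bnd: "\<And>p q. p \<le> q \<Longrightarrow> 0 \<le> F p q \<and> F p q \<le> e*(q-p)"
  shows "\<bar>D\<bar>*S \<le> e*t"
proof -
  have 1: "F (a+t) (a+S+t) = F a (a+S) + D*S" using rel[of a "a+S"] tp by simp
  have 2: "F a (a+S+t) = F a (a+t) + F (a+t) (a+S+t)" using add[of a "a+t" "a+S+t"] tp by simp
  have 3: "F a (a+S+t) = F a (a+S) + F (a+S) (a+S+t)" using add[of a "a+S" "a+S+t"] tp by simp
  have "D*S = F (a+S) (a+S+t) - F a (a+t)" using 1 2 3 by simp
  moreover have "0 \<le> F (a+S) (a+S+t)" "F (a+S) (a+S+t) \<le> e*t" using bnd[of "a+S" "a+S+t"] tp by auto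
  moreover have "0 \<le> F a (a+t)" "F a (a+t) \<le> e*t" using bnd[of "a" "a+t"] tp by auto
  ultimately show ?thesis using tp by (simp add: abs_mult)
qed
lemma box_eq: "{p..q::real} \<times> {y..z::real} = cbox (p,y) (q,z)" by (simp only: cbox_Pair_eq interval_cbox)

lemma box_lmeas: "{p..q::real} \<times> {y..z::real} \<in> lmeasurable"
  by (simp add: box_eq)

lemma box_meas: "p \<le> q \<Longrightarrow> y \<le> z \<Longrightarrow> measure lebesgue ({p..q::real} \<times> {y..z::real}) = (q-p)*(z-y)"
proof -
  assume "p \<le> q" "y \<le> z"
  have "measure lebesgue (cbox (p,y) (q,z)) = measure lborel (cbox (p,y) (q,z))"
    by (simp add: measure_completion)
  then show ?thesis using \<open>p \<le> q\<close> \<open>y \<le> z\<close> by (simp add: content_Pair box_eq)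
qed

lemma box_sets: "{p..q::real} \<times> {y..z::real} \<in> sets lebesgue"
  using box_lmeas fmeasurableD by blast

lemma EB_lmeas: "E \<in> sets lebesgue \<Longrightarrow> E \<inter> ({p..q::real} \<times> {y..z::real}) \<in> lmeasurable"
  by (metis Int_commute box_lmeas fmeasurable_Int_fmeasurable)

lemma meas_union0:
  assumes "X \<in> lmeasurable" "Y \<in> lmeasurable" "X \<inter> Y \<subseteq> Z" "Z \<in> lmeasurable" "measure lebesgue Z = 0"
  shows "measure lebesgue (X \<union> Y) = measure lebesgue X + measure lebesgue Y"
proof -
  have "measure lebesgue (X \<inter> Y) \<le> measure lebesgue Z"
    using assms by (intro measure_mono_fmeasurable) auto
  then have "measure lebesgue (X \<inter> Y) = 0" using assms(5) measure_nonneg[of lebesgue "X \<inter> Y"] by linarith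
  then show ?thesis using measure_Un3[OF assms(1,2)] by simp
qed

definition Fm :: "(real \<times> real) set \<Rightarrow> real \<Rightarrow> real \<Rightarrow> real \<Rightarrow> real" where
  "Fm E e p q = measure lebesgue (E \<inter> ({p..q} \<times> {-e..0}))"

definition Gm :: "(real \<times> real) set \<Rightarrow> real \<Rightarrow> real \<Rightarrow> real \<Rightarrow> real" where
  "Gm E e p q = measure lebesgue (E \<inter> ({p..q} \<times> {0..1+e}))"

lemma Fm_bnd:
  assumes "p \<le> q" "0 \<le> e" "E \<in> sets lebesgue"
  shows "0 \<le> Fm E e p q \<and> Fm E e p q \<le> e*(q-p)"
proof -
  have "Fm E e p q \<le> measure lebesgue ({p..q} \<times> {-e..0})"
    unfolding Fm_def using assms by (intro measure_mono_fmeasurable) (auto intro: box_lmeas EB_lmeas fmeasurableD)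
  then show ?thesis using assms box_meas[of p q "-e" 0] by (simp add: Fm_def mult.commute)
qed

lemma Fm_add:
  assumes "p \<le> q" "q \<le> r" "0 \<le> e" "E \<in> sets lebesgue"
  shows "Fm E e p r = Fm E e p q + Fm E e q r"
proof -
  have "E \<inter> ({p..r} \<times> {-e..0}) = (E \<inter> ({p..q} \<times> {-e..0})) \<union> (E \<inter> ({q..r} \<times> {-e..0}))"
    using assms by auto
  moreover have "measure lebesgue (\<dots>) = Fm E e p q + Fm E e q r"
    unfolding Fm_def
    by (rule meas_union0[where Z = "{q..q} \<times> {-e..0}"])
       (use assms box_lmeas[of q q "-e" 0] box_meas[of q q "-e" 0] in \<open>auto intro: EB_lmeas\<close>)
  ultimately show ?thesis by (simp add: Fm_def)
qed

lemma null_box: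
  assumes "X \<in> null_sets lebesgue" "{p..q::real} \<times> {y..z::real} \<subseteq> X" "p < q" "y < z"
  shows False
proof -
  have "{p..q::real} \<times> {y..z::real} \<in> null_sets lebesgue"
    using assms by (intro null_sets_subset[OF assms(1)]) (auto intro: box_sets)
  then have "measure lebesgue ({p..q::real} \<times> {y..z::real}) = 0" by (rule measure_eq_0_null_sets)
  then show False using box_meas[of p q y z] assms by simp
qed
lemma shift_lemma:
  assumes e: "e > 0" and Eb: "E \<subseteq> {-e..1+e} \<times> {-e..1+e}"
    and C: "complements E c d c' d' v" and cd: "c < d" and w: "d - c = d' - c'"
  shows "fst v = c - c'"
proof -
  obtain v1 v2 where v: "v = (v1, v2)" by (cases v)
  define A where "A = E2 E c d"
  define B where "B = (\<lambda>x. x + v) ` E1 E c' d'"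
  define Z where "Z = ((A \<union> B) - strip c d) \<union> (strip c d - (A \<union> B))"
  have Z: "Z \<in> null_sets lebesgue" using C by (simp add: complements_def Let_def A_def B_def Z_def)
  show ?thesis
  proof (rule ccontr)
    assume ne: "fst v \<noteq> c - c'"
    show False
    proof (cases "v1 > c - c'")
      case True
      define \<delta> where "\<delta> = min (v1 - (c - c')) (d - c)"
      have \<delta>: "\<delta> > 0" "\<delta> \<le> v1 - (c - c')" "\<delta> \<le> d - c" using True cd by (auto simp: \<delta>_def)
      have "{d'+v1-\<delta>/2..d'+v1} \<times> {v2..v2+1} \<subseteq> Z"
      proof (rule subsetI)
        fix x assume x: "x \<in> {d'+v1-\<delta>/2..d'+v1} \<times> {v2..v2+1}"
        obtain x1 x2 where xx: "x = (x1, x2)" by (cases x)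
        have "(x1 - v1, x2 - v2) \<in> E1 E c' d'" using x xx \<delta> w by (auto simp: E1_def)
        then have "x \<in> B" unfolding B_def v xx by (intro image_eqI[where x = "(x1 - v1, x2 - v2)"]) auto
        moreover have "x \<notin> strip c d" using x xx \<delta> w by (auto simp: strip_def)
        ultimately show "x \<in> Z" by (auto simp: Z_def)
      qed
      then show False by (rule null_box[OF Z]) (use \<delta> in auto)
    next
      case False
      then have lt: "v1 < c - c'" using ne v by auto
      define \<delta> where "\<delta> = min ((c - c') - v1) (d - c)"
      have \<delta>: "\<delta> > 0" "\<delta> \<le> (c - c') - v1" "\<delta> \<le> d - c" using lt cd by (auto simp: \<delta>_def)
      define K where "K = 2 + e"
      have "{d-\<delta>/2..d} \<times> {K..K+1} \<subseteq> Z"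
      proof (rule subsetI)
        fix x assume x: "x \<in> {d-\<delta>/2..d} \<times> {K..K+1}"
        obtain x1 x2 where xx: "x = (x1, x2)" by (cases x)
        have "x \<notin> A" using x xx Eb e by (auto simp: A_def E2_def K_def)
        moreover have "x \<notin> B" using x xx \<delta> w by (auto simp: B_def E1_def v)
        moreover have "x \<in> strip c d" using x xx \<delta> by (auto simp: strip_def)
        ultimately show "x \<in> Z" by (auto simp: Z_def)
      qed
      then show False by (rule null_box[OF Z]) (use \<delta> in auto)
    qed
  qed
qed
lemma transl_eq: "(\<lambda>x. x + (v::real\<times>real)) = (+) v" by (rule ext) (simp add: add.commute)

lemma image_transl_Int: "(\<lambda>x. x + (v::real\<times>real)) ` X \<inter> Q = (\<lambda>x. x + v) ` (X \<inter> {y. y + v \<in> Q})"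
  by auto

lemma ident_lemma:
  assumes e: "e > 0" and Em: "E \<in> sets lebesgue" and Eb: "E \<subseteq> {-e..1+e} \<times> {-e..1+e}"
    and C: "complements E c d c' d' v" and cd: "c < d" and w: "d - c = d' - c'"
    and pq: "c \<le> p" "p \<le> q" "q \<le> d"
  shows "Gm E e p q + Fm E e (p - fst v) (q - fst v) = snd v * (q - p)"
proof -
  obtain v1 v2 where v: "v = (v1, v2)" by (cases v)
  have v1: "v1 = c - c'" using shift_lemma[OF e Eb C cd w] v by simp
  define A where "A = E2 E c d"
  define B where "B = (\<lambda>x. x + v) ` E1 E c' d'"
  define Z where "Z = ((A \<union> B) - strip c d) \<union> (strip c d - (A \<union> B))"
  have Z: "Z \<in> null_sets lebesgue" and AB: "A \<inter> B \<in> null_sets lebesgue"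
    using C by (simp_all add: complements_def Let_def A_def B_def Z_def)
  define R where "R = \<bar>v2\<bar> + 2 + 2*e"
  have R: "R \<ge> 1 + e" "R - v2 \<ge> 0" "-R - v2 \<le> -e" using e by (auto simp: R_def)
  define Q where "Q = {p..q} \<times> {-R..R}"
  have Qs: "Q \<subseteq> strip c d" using pq by (auto simp: Q_def strip_def)
  have "Q \<inter> (A \<union> B) = Q - Z" using Qs by (auto simp: Z_def)
  then have m1: "measure lebesgue (Q \<inter> A \<union> Q \<inter> B) = 2*R*(q-p)"
    using measure_Diff_null_set[OF box_sets Z, of p q "-R" R] box_meas[of p q "-R" R] R pq e
    by (simp add: Q_def Int_Un_distrib algebra_simps)
  define QA1 where "QA1 = {p..q} \<times> {-R..0}"
  define QA2 where "QA2 = E \<inter> ({p..q} \<times> {0..1+e})"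
  have QA: "Q \<inter> A = QA1 \<union> QA2"
    using Eb R pq by (auto simp: Q_def A_def E2_def QA1_def QA2_def)
  have u1: "measure lebesgue (QA1 \<union> QA2) = measure lebesgue QA1 + measure lebesgue QA2"
    apply (rule meas_union0[where Z = "{p..q} \<times> {0..0}"])
    unfolding QA1_def QA2_def
        apply (rule box_lmeas)
       apply (rule EB_lmeas[OF Em])
      apply auto[1]
     apply (rule box_lmeas)
    using box_meas[of p q 0 0] pq by simp
  have mQA: "measure lebesgue (Q \<inter> A) = R*(q-p) + Gm E e p q"
    unfolding QA u1 using box_meas[of p q "-R" 0] pq R e by (simp add: QA1_def QA2_def Gm_def)
  define QB1 where "QB1 = {p-v1..q-v1} \<times> {0..R-v2}"
  define QB2 where "QB2 = E \<inter> ({p-v1..q-v1} \<times> {-e..0})"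
  have "E1 E c' d' \<inter> {y. y + v \<in> Q} = QB1 \<union> QB2"
    using Eb R pq v1 w e by (auto simp: Q_def E1_def QB1_def QB2_def v)
  then have QB: "Q \<inter> B = (\<lambda>x. x + v) ` (QB1 \<union> QB2)"
    unfolding B_def using image_transl_Int by blast
  have QBm: "QB1 \<union> QB2 \<in> lmeasurable"
    unfolding QB1_def QB2_def using box_lmeas EB_lmeas[OF Em] by blast
  have u2: "measure lebesgue (QB1 \<union> QB2) = measure lebesgue QB1 + measure lebesgue QB2"
    apply (rule meas_union0[where Z = "{p-v1..q-v1} \<times> {0..0}"])
    unfolding QB1_def QB2_def
        apply (rule box_lmeas)
       apply (rule EB_lmeas[OF Em])
      apply auto[1]
     apply (rule box_lmeas)
    using box_meas[of "p-v1" "q-v1" 0 0] pq by simp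
  have mQB0: "measure lebesgue (QB1 \<union> QB2) = (R - v2)*(q-p) + Fm E e (p - v1) (q - v1)"
    unfolding u2 using box_meas[of "p-v1" "q-v1" 0 "R-v2"] pq R by (simp add: QB1_def QB2_def Fm_def)
  have mQB: "measure lebesgue (Q \<inter> B) = (R - v2)*(q-p) + Fm E e (p - v1) (q - v1)"
    using mQB0 unfolding QB transl_eq measure_translation .
  have QAm: "Q \<inter> A \<in> lmeasurable" unfolding QA QA1_def QA2_def using box_lmeas EB_lmeas[OF Em] by blast
  have QBm': "Q \<inter> B \<in> lmeasurable" unfolding QB transl_eq using measurable_translation[OF QBm] .
  have "Q \<inter> A \<inter> (Q \<inter> B) = (A \<inter> B) \<inter> Q" by auto
  then have "measure lebesgue (Q \<inter> A \<inter> (Q \<inter> B)) = 0"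
    using null_set_Int2[OF AB, of Q] box_sets[of p q "-R" R] measure_eq_0_null_sets by (simp add: Q_def)
  then have "measure lebesgue (Q \<inter> A \<union> Q \<inter> B) = measure lebesgue (Q \<inter> A) + measure lebesgue (Q \<inter> B)"
    using measure_Un3[OF QAm QBm'] by simp
  then show ?thesis using m1 mQA mQB v by (simp add: algebra_simps)
qed
theorem lemma3p1:
  fixes E :: "(real \<times> real) set" and \<epsilon> s s' s'' a b :: real
    and v v' v'' :: "real \<times> real"
  assumes "\<epsilon> > 0"
    and "E \<in> sets lebesgue"
    and "{0..1} \<times> {0..1} \<subseteq> E"
    and "E \<subseteq> {-\<epsilon>..1+\<epsilon>} \<times> {-\<epsilon>..1+\<epsilon>}"
    and "0 < s''" "s'' < s'" "s' < s" "s < 2 * s''"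
    and "0 \<le> a" "a + s \<le> 1" "0 \<le> b - s" "b \<le> 1"
    and "complements E (b - s) b a (a + s) v"
    and "complements E (b - s') b a (a + s') v'"
    and "complements E (b - s'') b a (a + s'') v''"
  shows "collinear {v, v', v''} \<and>
         (v \<noteq> v'' \<longrightarrow> fst v'' \<noteq> fst v \<and>
            \<bar>(snd v'' - snd v) / (fst v'' - fst v)\<bar> \<le> \<epsilon> / (2 * s'' - s))"
proof -
  note e = assms(1) and Em = assms(2) and Eb = assms(4)
  have s: "0 < s''" "s'' < s'" "s' < s" "s < 2 * s''" using assms by auto
  have f: "fst v = b - s - a" using shift_lemma[OF e Eb assms(13)] s by simp
  have f': "fst v' = b - s' - a" using shift_lemma[OF e Eb assms(14)] s by simp
  have f'': "fst v'' = b - s'' - a" using shift_lemma[OF e Eb assms(15)] s by simp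
  define F where "F = Fm E \<epsilon>"
  define D where "D = snd v - snd v''"
  define D' where "D' = snd v' - snd v''"
  have base: "Gm E \<epsilon> (x + (b - s'' - a)) (y + (b - s'' - a)) + F x y = snd v'' * (y - x)"
    if "a \<le> x" "x \<le> y" "y \<le> a + s''" for x y
    using ident_lemma[OF e Em Eb assms(15), of "x + (b - s'' - a)" "y + (b - s'' - a)"] that s f''
    by (simp add: F_def)
  have rel: "F (x + (s - s'')) (y + (s - s'')) = F x y + D*(y-x)"
    if "a \<le> x" "x \<le> y" "y \<le> a + s''" for x y
  proof -
    have "Gm E \<epsilon> (x + (b - s'' - a)) (y + (b - s'' - a)) + F (x + (s - s'')) (y + (s - s'')) = snd v * (y - x)"
      using ident_lemma[OF e Em Eb assms(13), of "x + (b - s'' - a)" "y + (b - s'' - a)"] that s f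
      by (simp add: F_def algebra_simps)
    then show ?thesis using base[OF that] by (simp add: D_def algebra_simps)
  qed
  have rel': "F (x + (s' - s'')) (y + (s' - s'')) = F x y + D'*(y-x)"
    if "a \<le> x" "x \<le> y" "y \<le> a + s''" for x y
  proof -
    have "Gm E \<epsilon> (x + (b - s'' - a)) (y + (b - s'' - a)) + F (x + (s' - s'')) (y + (s' - s'')) = snd v' * (y - x)"
      using ident_lemma[OF e Em Eb assms(14), of "x + (b - s'' - a)" "y + (b - s'' - a)"] that s f'
      by (simp add: F_def algebra_simps)
    then show ?thesis using base[OF that] by (simp add: D'_def algebra_simps)
  qed
  have bnd: "0 \<le> F p q \<and> F p q \<le> \<epsilon>*(q-p)" if "p \<le> q" for p q
    using Fm_bnd[OF that _ Em] e by (simp add: F_def)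
  have add: "F p r = F p q + F q r" if "p \<le> q" "q \<le> r" for p q r
    using Fm_add[OF that _ Em] e by (simp add: F_def)
  have col: "D' * (s - s'') = D * (s' - s'')"
    by (rule chain_lemma[OF _ _ _ rel rel' bnd]) (use s in auto)
  have sl: "\<bar>D\<bar> * s'' \<le> \<epsilon> * (s - s'')"
    by (rule slope_lemma[OF _ _ rel add bnd]) (use s in auto)
  have "collinear {v, v'', v'}"
  proof -
    have "v' - v'' = ((s' - s'')/(s - s'')) *\<^sub>R (v - v'')"
    proof -
      have k: "D' = ((s'-s'')/(s-s''))*D" using col s by (simp add: field_simps)
      have c1: "fst v' - fst v'' = ((s'-s'')/(s-s'')) * (fst v - fst v'')"
        unfolding f f' f'' using s by (simp add: field_simps)
      have c2: "snd v' - snd v'' = ((s'-s'')/(s-s'')) * (snd v - snd v'')"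
        using k by (simp add: D_def D'_def)
      show ?thesis using c1 c2 by (simp add: prod_eq_iff)
    qed
    then have "collinear {0, v - v'', v' - v''}" by (auto simp: collinear_lemma)
    then show ?thesis by (subst collinear_3) auto
  qed
  then have c1: "collinear {v, v', v''}" by (simp add: insert_commute)
  have ne: "fst v'' \<noteq> fst v" using f f'' s by simp
  have "\<bar>(snd v'' - snd v) / (fst v'' - fst v)\<bar> = \<bar>D\<bar> / (s - s'')"
    using f f'' s by (simp add: D_def abs_minus_commute)
  also have "\<dots> \<le> \<epsilon> / s''" using sl s by (simp add: field_simps)
  also have "\<dots> \<le> \<epsilon> / (2 * s'' - s)" using s e by (intro divide_left_mono) auto
  finally show ?thesis using c1 ne by blast
qed

end
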